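(* Let $\mathcal{M}$ be a Riemannian submanifold of a Euclidean space $\mathcal{E}$ (with induced norm $\|\cdot\|_{\mathcal{M}}$) and let $f:\mathcal{M}\times\mathbb{R}^n\to\mathbb{R}$ be differentiable. Let $\operatorname{Retr}_{\mathcal{M}}$ be a retraction on $\mathcal{M}$ and assume: (i) there is $L_y\ge0$ with $\|\nabla_yf(\boldsymbol{x},\boldsymbol{y}^1)-\nabla_yf(\boldsymbol{x},\boldsymbol{y}^2)\|\le L_y\|\boldsymbol{y}^1-\boldsymbol{y}^2\|$ for all $\boldsymbol{x}\in\mathcal{M}$, $\boldsymbol{y}^1,\boldsymbol{y}^2\in\mathbb{R}^n$; (ii) there is $L_x\ge1$ such that for all $\boldsymbol{y}$, $f(\cdot,\boldsymbol{y})$ has a gradient Lipschitz retraction with constant $L_x$ with respect to $\operatorname{Retr}_{\mathcal{M}}$, i.e. $f(\operatorname{Retr}_{\mathcal{M}}(\boldsymbol{x},\boldsymbol{v}),\boldsymbol{y})\le f(\boldsymbol{x},\boldsymbol{y})+\langle\operatorname{grad}_xf(\boldsymbol{x},\boldsymbol{y}),\boldsymbol{v}\rangle_{\boldsymbol{x}}+\frac{L_x}{2}\|\boldsymbol{v}\|_{\boldsymbol{x}}^2$ for all $\boldsymbol{x}\in\mathcal{M}$, $\boldsymbol{v}\in T_{\boldsymbol{x}}\mathcal{M}$; (iii) there is $L_{xy}\ge0$ with $\|\nabla_yf(\boldsymbol{x}^1,\boldsymbol{y})-\nabla_yf(\boldsymbol{x}^2,\boldsymbol{y})\|\le L_{xy}\|\boldsymbol{x}^1-\boldsymbol{x}^2\|_{\mathcal{M}}$;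 (iv) the injectivity radius of $\mathcal{M}$ is strictly positive and there is $L_1>0$ with $\|\operatorname{Retr}_{\mathcal{M}}(\boldsymbol{x},\boldsymbol{v})-\boldsymbol{x}\|_{\mathcal{M}}\le L_1\|\boldsymbol{v}\|_{\boldsymbol{x}}$ for all $\boldsymbol{x}\in\mathcal{M}$, $\boldsymbol{v}\in T_{\boldsymbol{x}}\mathcal{M}$. Define $\bar f:\mathcal{M}'=\mathcal{M}\times\mathbb{R}^n\to\mathbb{R}$ by $\bar f(\boldsymbol{x},\boldsymbol{y})=f(\boldsymbol{x},\boldsymbol{y})$ and the retraction $\operatorname{Retr}_{\mathcal{M}'}((\boldsymbol{x},\boldsymbol{y}),(\eta_x,\eta_y))=(\operatorname{Retr}_{\mathcal{M}}(\boldsymbol{x},\eta_x),\boldsymbol{y}+\eta_y)$. Then $\bar f$ has a gradient Lipschitz retraction with respect to $\operatorname{Retr}_{\mathcal{M}'}$ with constant $L_R=L_{xy}L_1+\max(L_x,L_y)$, i.e. for all $\boldsymbol{z}\in\mathcal{M}'$ and $\eta\in T_{\boldsymbol{z}}\mathcal{M}'$, $$\bar f(\operatorname{Retr}_{\mathcal{M}'}(\boldsymbol{z},\eta))\le\bar f(\boldsymbol{z})+\langle\operatorname{grad}\bar f(\boldsymbol{z}),\eta\rangle_{\boldsymbol{z}}+\frac{L_R}{2}\|\eta\|_{\boldsymbol{z}}^2.$$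
   Context: $\operatorname{grad}$ denotes the Riemannian gradient, $\nabla_y$ the Euclidean gradient in $\boldsymbol{y}$; $\mathcal{M}'$ carries the product metric $\langle(\eta_x,\eta_y),(\xi_x,\xi_y)\rangle_{\boldsymbol{z}}=\langle\eta_x,\xi_x\rangle_{\boldsymbol{x}}+\eta_y^\top\xi_y$. A retraction is a smooth map $\operatorname{Retr}:T\mathcal{M}\to\mathcal{M}$ with $\operatorname{Retr}(\boldsymbol{x},\boldsymbol{0})=\boldsymbol{x}$ and $D\operatorname{Retr}(\boldsymbol{x},\cdot)(\boldsymbol{0})=\mathrm{id}$. *)

theory Defs
  imports "HOL-Analysis.Analysis"
begin

fun Ck_on :: "nat \<Rightarrow> 'a::euclidean_space set \<Rightarrow> ('a \<Rightarrow> 'b::euclidean_space) \<Rightarrow> bool" where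
  "Ck_on 0 U f = continuous_on U f"
| "Ck_on (Suc k) U f =
     ((\<forall>x\<in>U. f differentiable (at x)) \<and>
      (\<forall>v. Ck_on k U (\<lambda>x. frechet_derivative f (at x) v)))"

definition smooth_on :: "'a::euclidean_space set \<Rightarrow> ('a \<Rightarrow> 'b::euclidean_space) \<Rightarrow> bool" where
  "smooth_on U f \<longleftrightarrow> (\<forall>k. Ck_on k U f)"

definition smooth_map_on :: "'a::euclidean_space set \<Rightarrow> ('a \<Rightarrow> 'b::euclidean_space) \<Rightarrow> bool" where
  "smooth_map_on S F \<longleftrightarrow>
     (\<forall>p\<in>S. \<exists>U G. open U \<and> p \<in> U \<and> smooth_on U G \<and> (\<forall>q\<in>S \<inter> U. G q = F q))"

definition differentiable_on_set :: "'a::euclidean_space set \<Rightarrow> ('a \<Rightarrow> real) \<Rightarrow> bool" where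
  "differentiable_on_set S g \<longleftrightarrow>
     (\<forall>p\<in>S. \<exists>U G. open U \<and> p \<in> U \<and> (\<forall>q\<in>U. G differentiable (at q)) \<and> (\<forall>q\<in>S \<inter> U. G q = g q))"

definition embedded_submanifold :: "'a::euclidean_space set \<Rightarrow> bool" where
  "embedded_submanifold M \<longleftrightarrow>
     (\<forall>x\<in>M. \<exists>U (h::'a \<Rightarrow> 'a) k. open U \<and> x \<in> U \<and> smooth_on U h \<and>
        (\<forall>p\<in>U. dim (range (frechet_derivative h (at p))) = k) \<and>
        M \<inter> U = {p\<in>U. h p = 0})"

definition curve_through :: "'a::euclidean_space set \<Rightarrow> 'a \<Rightarrow> 'a \<Rightarrow> (real \<Rightarrow> 'a) \<Rightarrow> bool" where
  "curve_through M x v \<gamma> \<longleftrightarrow>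
     \<gamma> 0 = x \<and> (\<exists>e>0. \<forall>t. \<bar>t\<bar> < e \<longrightarrow> \<gamma> t \<in> M) \<and> (\<gamma> has_vector_derivative v) (at 0)"

definition tangent_space :: "'a::euclidean_space set \<Rightarrow> 'a \<Rightarrow> 'a set" where
  "tangent_space M x = {v. \<exists>\<gamma>. curve_through M x v \<gamma>}"

definition riem_grad :: "'a::euclidean_space set \<Rightarrow> ('a \<Rightarrow> real) \<Rightarrow> 'a \<Rightarrow> 'a" where
  "riem_grad M g x = (THE u. u \<in> tangent_space M x \<and>
     (\<forall>\<gamma> v. curve_through M x v \<gamma> \<longrightarrow> ((g \<circ> \<gamma>) has_real_derivative (u \<bullet> v)) (at 0)))"

definition egrad :: "('a::euclidean_space \<Rightarrow> real) \<Rightarrow> 'a \<Rightarrow> 'a" where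
  "egrad g y = (THE u. (g has_derivative (\<lambda>h. u \<bullet> h)) (at y))"

definition retraction :: "'a::euclidean_space set \<Rightarrow> ('a \<Rightarrow> 'a \<Rightarrow> 'a) \<Rightarrow> bool" where
  "retraction M R \<longleftrightarrow>
     (\<forall>x\<in>M. \<forall>v\<in>tangent_space M x. R x v \<in> M) \<and>
     smooth_map_on {(x, v). x \<in> M \<and> v \<in> tangent_space M x} (\<lambda>(x, v). R x v) \<and>
     (\<forall>x\<in>M. R x 0 = x) \<and>
     (\<forall>x\<in>M. \<forall>v\<in>tangent_space M x. ((\<lambda>t. R x (t *\<^sub>R v)) has_vector_derivative v) (at 0))"

definition grad_lipschitz_retraction ::
  "'a::euclidean_space set \<Rightarrow> ('a \<Rightarrow> real) \<Rightarrow> ('a \<Rightarrow> 'a \<Rightarrow> 'a) \<Rightarrow> real \<Rightarrow> bool" where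
  "grad_lipschitz_retraction M g R L \<longleftrightarrow>
     (\<forall>x\<in>M. \<forall>v\<in>tangent_space M x.
        g (R x v) \<le> g x + riem_grad M g x \<bullet> v + L / 2 * (norm v)\<^sup>2)"

definition geodesic_from :: "'a::euclidean_space set \<Rightarrow> 'a \<Rightarrow> 'a \<Rightarrow> (real \<Rightarrow> 'a) \<Rightarrow> bool" where
  "geodesic_from M x v \<gamma> \<longleftrightarrow>
     \<gamma> 0 = x \<and> (\<forall>t\<in>{0..1}. \<gamma> t \<in> M) \<and>
     (\<exists>\<gamma>' \<gamma>''. \<gamma>' 0 = v \<and>
        (\<forall>t\<in>{0..1}. (\<gamma> has_vector_derivative \<gamma>' t) (at t within {0..1}) \<and>
                     (\<gamma>' has_vector_derivative \<gamma>'' t) (at t within {0..1}) \<and>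
                     (\<forall>w\<in>tangent_space M (\<gamma> t). \<gamma>'' t \<bullet> w = 0)))"

definition exp_map :: "'a::euclidean_space set \<Rightarrow> 'a \<Rightarrow> 'a \<Rightarrow> 'a" where
  "exp_map M x v = (THE p. \<exists>\<gamma>. geodesic_from M x v \<gamma> \<and> p = \<gamma> 1)"

definition inj_radius_at :: "'a::euclidean_space set \<Rightarrow> 'a \<Rightarrow> ereal" where
  "inj_radius_at M x = Sup (ereal ` {r. r \<ge> 0 \<and>
     (\<forall>v\<in>tangent_space M x \<inter> ball 0 r. \<exists>\<gamma>. geodesic_from M x v \<gamma>) \<and>
     inj_on (exp_map M x) (tangent_space M x \<inter> ball 0 r) \<and>
     (\<forall>v\<in>tangent_space M x \<inter> ball 0 r. \<exists>D. linear D \<and>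
        (exp_map M x has_derivative D) (at v within tangent_space M x) \<and>
        inj_on D (tangent_space M x))})"

definition inj_radius :: "'a::euclidean_space set \<Rightarrow> ereal" where
  "inj_radius M = (INF x\<in>M. inj_radius_at M x)"

definition prod_retr :: "('a \<Rightarrow> 'a \<Rightarrow> 'a) \<Rightarrow> ('a \<times> 'b::real_vector) \<Rightarrow> ('a \<times> 'b) \<Rightarrow> ('a \<times> 'b)" where
  "prod_retr R z \<eta> = (R (fst z) (fst \<eta>), snd z + snd \<eta>)"

end

theory Submission
  imports Defs
begin

lemma proj_exists:
  fixes K :: "'a::euclidean_space set"
  assumes "subspace K"
  obtains P where "linear P" "\<And>v. P v \<in> K" "\<And>v. v \<in> K \<Longrightarrow> P v = v"
proof -
  obtain B where B: "B \<subseteq> K" "pairwise orthogonal B" "span B = K"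
    using orthogonal_basis_subspace[OF assms] by metis
  define P where "P v = (\<Sum>b\<in>B. (b \<bullet> v / (b \<bullet> b)) *\<^sub>R b)" for v
  have lin: "linear P"
  proof (rule linearI)
    fix x y show "P (x + y) = P x + P y"
      unfolding P_def by (simp add: inner_add_right add_divide_distrib scaleR_add_left sum.distrib)
  next
    fix c x show "P (c *\<^sub>R x) = c *\<^sub>R P x"
      unfolding P_def by (simp add: scaleR_sum_right)
  qed
  have inB: "P v \<in> span B" for v
    unfolding P_def by (intro span_sum span_scale span_base)
  have inK: "P v \<in> K" for v using inB B(3) by simp
  have id: "P v = v" if "v \<in> K" for v
  proof -
    have d: "v - P v \<in> span B" using subspace_diff[OF assms that inK[of v]] B(3) by simp
    have o: "orthogonal (v - P v) (v - P v)"
      using Gram_Schmidt_step[OF B(2) d, of v] by (simp add: P_def)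
    then show ?thesis by (simp add: orthogonal_def)
  qed
  show ?thesis using that lin inK id by blast
qed
lemma inj_on_dim:
  fixes f :: "'a::euclidean_space \<Rightarrow> 'b::euclidean_space"
  assumes "linear f" "subspace S" "dim S \<le> dim (f ` S)"
  shows "inj_on f S"
proof -
  obtain B where B: "B \<subseteq> S" "independent B" "S \<subseteq> span B" "card B = dim S"
    using basis_exists[of S] by blast
  have fin: "finite B" using B(2) finiteI_independent by blast
  have sp: "f ` S \<subseteq> span (f ` B)"
    using B(3) assms(1) by (metis image_mono span_linear_image)
  have "dim (f ` S) \<le> card (f ` B)"
    using span_card_ge_dim[of "f ` B" "f ` S"] B(1) sp fin by blast
  moreover have "card (f ` B) \<le> card B" using fin card_image_le by blast
  ultimately have c: "card (f ` B) = card B" "card (f ` B) = dim (f ` S)"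
    using assms(3) B(4) by linarith+
  have injB: "inj_on f B" using eq_card_imp_inj_on[OF fin c(1)] .
  have ind: "independent (f ` B)"
    using card_eq_dim[of "f ` B" "f ` S"] B(1) c(2) sp fin by blast
  have "inj_on f (span B)"
    using linear_inj_on_span_iff_independent_image[OF assms(1) ind] injB by blast
  then show ?thesis using B(3) inj_on_subset by blast
qed

lemma rank_lemma:
  fixes A C :: "'a::euclidean_space \<Rightarrow> 'b::euclidean_space"
  assumes lA: "linear A" and lC: "linear (C::'a \<Rightarrow> 'b)" and lP: "linear (P::'a\<Rightarrow>'a)"
    and PK: "\<And>v. A (P v) = 0"
    and sJ: "surj (\<lambda>w. P w + adjoint A (C w))"
    and dC: "dim (range C) = dim (range A)"
    and w: "A (P w + adjoint A (C w)) = 0"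
  shows "C w = 0"
proof -
  let ?As = "adjoint A"
  have lAs: "linear ?As" using lA adjoint_linear by blast
  have orth: "v \<bullet> ?As y = 0" if "A v = 0" for v y
    using adjoint_works[OF lA, of v y] that by simp
  have "A (?As (C w)) = 0"
    using w PK lA by (simp add: linear_add)
  then have "?As (C w) \<bullet> ?As (C w) = 0" using orth by blast
  then have Cw0: "?As (C w) = 0" by simp
  have sub1: "range ?As \<subseteq> ?As ` range C"
  proof
    fix u assume "u \<in> range ?As"
    then obtain z where z: "u = ?As z" by (rule rangeE)
    obtain w' where w'0: "?As z = P w' + ?As (C w')" using surjD[OF sJ, of "?As z"] by (rule exE)
    then have w': "P w' + ?As (C w') = ?As z" by (rule sym)
    have "P w' = ?As z - ?As (C w')"
      using w' by (metis add_diff_cancel_right')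
    also have "\<dots> = ?As (z - C w')" using lAs by (simp add: linear_diff)
    finally have "P w' = ?As (z - C w')" .
    then have "P w' \<bullet> P w' = 0" using orth[OF PK[of w'], of "z - C w'"] by simp
    then have "P w' = 0" by simp
    then have "u = ?As (C w')" using w' z by (metis add_0)
    then show "u \<in> ?As ` range C" by blast
  qed
  have spA: "span (range A) = range A"
    using lA by (simp add: span_linear_image)
  have injA: "inj_on ?As (span (range A))"
    unfolding spA
  proof (rule inj_onI)
    fix a b assume "a \<in> range A" "b \<in> range A" "?As a = ?As b"
    then obtain za zb where zz: "a = A za" "b = A zb" by blast
    define z where "z = za - zb"
    have z: "a - b = A z" "?As (A z) = 0"
      using zz lA lAs \<open>?As a = ?As b\<close> unfolding z_def by (simp_all add: linear_diff)
    have "A z \<bullet> A z = 0" using adjoint_works[OF lA, of z "A z"] z(2) by simp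
    then show "a = b" using z(1) by simp
  qed
  have "dim (range A) = dim (?As ` range A)"
    using dim_image_eq[OF lAs injA] by simp
  also have "\<dots> \<le> dim (range ?As)" by (rule dim_subset) blast
  also have "\<dots> \<le> dim (?As ` range C)" by (rule dim_subset[OF sub1])
  finally have "dim (range C) \<le> dim (?As ` range C)" using dC by simp
  then have "inj_on ?As (range C)"
    using inj_on_dim[OF lAs] lC by (simp add: subspace_UNIV linear_subspace_image)
  moreover have "?As (C 0) = 0" using lC lAs by (simp add: linear_0)
  ultimately have "C w = C 0" using Cw0 by (metis inj_onD rangeI)
  then show ?thesis using lC by (simp add: linear_0)
qed

lemma curve_eventually_in:
  fixes \<gamma> :: "real \<Rightarrow> 'a::euclidean_space"
  assumes "(\<gamma> has_vector_derivative v) (at 0)" "open U" "\<gamma> 0 \<in> U"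
  obtains d where "d > 0" "\<And>t. \<bar>t\<bar> < d \<Longrightarrow> \<gamma> t \<in> U"
proof -
  obtain \<epsilon> where \<epsilon>: "\<epsilon> > 0" "ball (\<gamma> 0) \<epsilon> \<subseteq> U"
    using assms(2,3) open_contains_ball by blast
  have "continuous (at 0) \<gamma>" using has_vector_derivative_continuous[OF assms(1)] .
  then obtain d where d: "d > 0" "\<And>t. dist t 0 < d \<Longrightarrow> dist (\<gamma> t) (\<gamma> 0) < \<epsilon>"
    unfolding continuous_at_eps_delta using \<epsilon>(1) by blast
  show ?thesis
  proof (rule that[OF d(1)])
    fix t :: real assume "\<bar>t\<bar> < d"
    then have "dist (\<gamma> t) (\<gamma> 0) < \<epsilon>" using d(2) by simp
    then show "\<gamma> t \<in> U" using \<epsilon>(2) by (auto simp: dist_commute)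
  qed
qed

lemma tangent_in_ker:
  fixes h :: "'a::euclidean_space \<Rightarrow> 'b::euclidean_space"
  assumes U: "open U" "x \<in> U" and MU: "M \<inter> U = {p\<in>U. h p = 0}"
    and dh: "(h has_derivative A) (at x)"
    and v: "v \<in> tangent_space M x"
  shows "A v = 0"
proof -
  obtain \<gamma> e where g: "\<gamma> 0 = x" "e > 0" "\<And>t. \<bar>t\<bar> < e \<Longrightarrow> \<gamma> t \<in> M"
      "(\<gamma> has_vector_derivative v) (at 0)"
    using v unfolding tangent_space_def curve_through_def by blast
  obtain d where d: "d > 0" "\<And>t. \<bar>t\<bar> < d \<Longrightarrow> \<gamma> t \<in> U"
    using curve_eventually_in[OF g(4) U(1)] g(1) U(2) by metis
  have der: "((\<lambda>t. h (\<gamma> t)) has_derivative (\<lambda>s. A (s *\<^sub>R v))) (at 0)"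
    using diff_chain_at[OF g(4)[unfolded has_vector_derivative_def], of h A] dh g(1)
    by (simp add: o_def)
  have z: "h (\<gamma> t) = 0" if "t \<in> ball 0 (min d e)" for t
  proof -
    have "\<bar>t\<bar> < d" "\<bar>t\<bar> < e" using that by auto
    then have "\<gamma> t \<in> M \<inter> U" using d g by blast
    then show ?thesis using MU by blast
  qed
  have "((\<lambda>t. 0::'b) has_derivative (\<lambda>s. A (s *\<^sub>R v))) (at 0)"
    by (rule has_derivative_transform_within_open[OF der, of "ball 0 (min d e)"])
       (use d g z in auto)
  moreover have "((\<lambda>t. 0::'b) has_derivative (\<lambda>s. 0)) (at (0::real))" by simp
  ultimately have "(\<lambda>s. A (s *\<^sub>R v)) = (\<lambda>s. 0)" by (rule has_derivative_unique)
  then show ?thesis by (metis scale_one)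
qed

lemma ker_in_tangent:
  fixes h :: "'a::euclidean_space \<Rightarrow> 'b::euclidean_space"
  assumes U: "open U" "x \<in> U" and MU: "M \<inter> U = {p\<in>U. h p = 0}" and xM: "x \<in> M"
    and dh: "\<And>p. p \<in> U \<Longrightarrow> (h has_derivative Dh p) (at p)"
    and cont: "\<And>v. continuous_on U (\<lambda>p. Dh p v)"
    and rk: "\<And>p. p \<in> U \<Longrightarrow> dim (range (Dh p)) = k"
    and v: "Dh x v = 0"
  shows "v \<in> tangent_space M x"
proof -
  define A where "A = Dh x"
  have linD: "linear (Dh p)" if "p \<in> U" for p using has_derivative_linear[OF dh[OF that]] .
  have lA: "linear A" unfolding A_def using linD U(2) .
  define As where "As = adjoint A"
  have lAs: "linear As" unfolding As_def using lA adjoint_linear by blast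
  have bAs: "bounded_linear As" using lAs linear_conv_bounded_linear by blast
  have subK: "subspace {w. A w = 0}" unfolding subspace_def using linear_0[OF lA] linear_add[OF lA] linear_scale[OF lA] by simp
  obtain P where lP: "linear P" and PK0: "\<And>w. P w \<in> {w. A w = 0}" and Pid0: "\<And>w. w \<in> {w. A w = 0} \<Longrightarrow> P w = w"
    using proj_exists[OF subK] by metis
  have PK: "A (P w) = 0" for w using PK0[of w] by simp
  have Pid: "P w = w" if "A w = 0" for w using Pid0[of w] that by simp
  have bP: "bounded_linear P" using lP linear_conv_bounded_linear by blast
  have orth: "w \<bullet> As y = 0" if "A w = 0" for w y
    using adjoint_works[OF lA, of w y] that unfolding As_def by simp
  define J where "J p = (\<lambda>w. P w + As (Dh p w))" for p
  have lJ: "linear (J p)" if "p \<in> U" for p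
    unfolding J_def using linear_compose_add[OF lP linear_compose[OF linD[OF that] lAs, unfolded o_def]] .
  have bJ: "bounded_linear (J p)" if "p \<in> U" for p using lJ[OF that] linear_conv_bounded_linear by blast
  define \<phi> where "\<phi> p = P (p - x) + As (h p)" for p
  define f' where "f' p = Blinfun (J p)" for p
  have f'a: "blinfun_apply (f' p) = J p" if "p \<in> U" for p
    unfolding f'_def using bJ[OF that] by (rule bounded_linear_Blinfun_apply)
  have derf: "(\<phi> has_derivative blinfun_apply (f' p)) (at p)" if "p \<in> U" for p
  proof -
    have d1: "((\<lambda>p. p - x) has_derivative (\<lambda>w. w)) (at p)"
      by (auto intro!: derivative_eq_intros)
    have d2: "((\<lambda>p. P (p - x)) has_derivative (\<lambda>w. P w)) (at p)"
      by (rule bounded_linear.has_derivative[OF bP d1])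
    have d3: "((\<lambda>p. As (h p)) has_derivative (\<lambda>w. As (Dh p w))) (at p)"
      by (rule bounded_linear.has_derivative[OF bAs dh[OF that]])
    show ?thesis unfolding f'a[OF that] J_def \<phi>_def
      using has_derivative_add[OF d2 d3] by simp
  qed
  have contf: "continuous_on U f'"
  proof (rule continuous_on_blinfun_componentwise)
    fix i :: 'a
    have "continuous_on U (\<lambda>p. P i + As (Dh p i))"
      by (intro continuous_on_add continuous_on_const bounded_linear.continuous_on[OF bAs] cont)
    then show "continuous_on U (\<lambda>p. blinfun_apply (f' p) i)"
      by (rule continuous_on_cong[THEN iffD1, rotated 2]) (auto simp: f'a J_def)
  qed
  have injJx: "inj (J x)"
  proof -
    have "w = 0" if "J x w = 0" for w
    proof -
      have e: "P w = - As (A w)" using that unfolding J_def A_def by (simp add: eq_neg_iff_add_eq_0)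
      then have "P w = As (- A w)" using lAs by (simp add: linear_neg)
      then have "P w \<bullet> P w = 0" using orth[OF PK[of w], of "- A w"] by simp
      then have Pw: "P w = 0" by simp
      then have "As (A w) = 0" using e by simp
      then have "A w \<bullet> A w = 0" using adjoint_works[OF lA, of w "A w"] unfolding As_def by simp
      then have "A w = 0" by simp
      then show "w = 0" using Pid Pw by metis
    qed
    then show ?thesis using lJ[OF U(2)] by (metis linear_injective_0 injI linear_diff eq_iff_diff_eq_0)
  qed
  obtain Ji where lJi: "linear Ji" and Ji1: "\<And>w. Ji (J x w) = w" and Ji2: "\<And>w. J x (Ji w) = w"
    using linear_surjective_isomorphism[OF lJ[OF U(2)] linear_inj_imp_surj[OF lJ[OF U(2)] injJx]]
    by auto
  have bJi: "bounded_linear Ji" using lJi linear_conv_bounded_linear by blast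
  have invf: "Blinfun Ji o\<^sub>L f' x = id_blinfun"
    by (rule blinfun_eqI) (simp add: bounded_linear_Blinfun_apply[OF bJi] f'a[OF U(2)] Ji1)
  obtain U' V g g' where U': "open U'" "U' \<subseteq> U" "x \<in> U'" and V: "open V" "\<phi> x \<in> V"
    and hom: "homeomorphism U' V \<phi> g"
    and dg: "\<And>y. y \<in> V \<Longrightarrow> (g has_derivative (g' y)) (at y)"
    and g'eq: "\<And>y. y \<in> V \<Longrightarrow> g' y = inv (blinfun_apply (f'(g y)))"
    and bijf: "\<And>y. y \<in> V \<Longrightarrow> bij (blinfun_apply (f'(g y)))"
    using inverse_function_theorem[OF U(1) derf contf U(2) invf] by metis
  have hx: "h x = 0" using xM U(2) MU by blast
  have phix: "\<phi> x = 0" unfolding \<phi>_def using hx linear_0[OF lP] linear_0[OF lAs] by simp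
  have Av: "A v = 0" using v unfolding A_def .
  obtain r where r: "r > 0" "ball 0 r \<subseteq> V" using V phix open_contains_ball by metis
  have gphi: "\<And>a. a \<in> U' \<Longrightarrow> g (\<phi> a) = a" and gV: "\<And>q. q \<in> V \<Longrightarrow> g q \<in> U'"
    using hom unfolding homeomorphism_def by auto
  have g0: "g 0 = x" using gphi[OF U'(3)] phix by simp
  have key: "Dh (g q) (g' q v) = 0" if q: "q \<in> V" for q
  proof -
    define p where "p = g q"
    have pU: "p \<in> U" using gV[OF q] U'(2) unfolding p_def by blast
    have bijp: "bij (J p)" using bijf[OF q] f'a[OF pU] unfolding p_def by simp
    have g'q: "g' q = inv (J p)" using g'eq[OF q] f'a[OF pU] unfolding p_def by simp
    define w where "w = inv (J p) v"
    have Jw: "J p w = v" unfolding w_def using bijp by (simp add: bij_is_surj surj_f_inv_f)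
    have sJ: "surj (\<lambda>w. P w + adjoint A (Dh p w))"
      using bij_is_surj[OF bijp] unfolding J_def As_def .
    have "A (P w + adjoint A (Dh p w)) = 0" using Jw Av unfolding J_def As_def by simp
    then have "Dh p w = 0"
      using rank_lemma[OF lA linD[OF pU] lP PK sJ] rk[OF pU] rk[OF U(2)] unfolding A_def by simp
    then show ?thesis unfolding g'q w_def p_def by simp
  qed
  define \<rho> where "\<rho> = r / (norm v + 1)"
  have \<rho>: "\<rho> > 0" unfolding \<rho>_def using r(1) norm_ge_zero[of v] by (intro divide_pos_pos) linarith+
  have inV: "t *\<^sub>R v \<in> V" if "\<bar>t\<bar> < \<rho>" for t
  proof -
    have "norm (t *\<^sub>R v) = \<bar>t\<bar> * norm v" by simp
    also have "\<dots> \<le> \<rho> * norm v" using that by (simp add: mult_right_mono)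
    also have "\<dots> < r"
    proof -
      have np: "norm v + 1 > 0" using norm_ge_zero[of v] by linarith
      have "r * norm v < r * (norm v + 1)" using r(1) by simp
      then have "r * norm v / (norm v + 1) < r" using np by (simp add: pos_divide_less_eq)
      then show ?thesis unfolding \<rho>_def by simp
    qed
    finally show ?thesis using r(2) by auto
  qed
  have dsc: "((\<lambda>t. t *\<^sub>R v) has_derivative (\<lambda>s. s *\<^sub>R v)) (at t)" for t :: real
    by (auto intro!: derivative_eq_intros)
  have dpsi: "((\<lambda>t. h (g (t *\<^sub>R v))) has_derivative (\<lambda>s. 0)) (at t within ball 0 \<rho>)"
    if t: "t \<in> ball 0 \<rho>" for t
  proof -
    have q: "t *\<^sub>R v \<in> V" using inV t by simp
    have pU: "g (t *\<^sub>R v) \<in> U" using gV[OF q] U'(2) by blast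
    have c1: "((g \<circ> (\<lambda>t. t *\<^sub>R v)) has_derivative (g' (t *\<^sub>R v) \<circ> (\<lambda>s. s *\<^sub>R v))) (at t)"
      by (rule diff_chain_at[OF dsc dg[OF q]])
    have c2: "((h \<circ> (g \<circ> (\<lambda>t. t *\<^sub>R v))) has_derivative
        (Dh (g (t *\<^sub>R v)) \<circ> (g' (t *\<^sub>R v) \<circ> (\<lambda>s. s *\<^sub>R v)))) (at t)"
      by (rule diff_chain_at[OF c1]) (use dh[OF pU] in simp)
    have lg': "linear (g' (t *\<^sub>R v))" using has_derivative_linear[OF dg[OF q]] .
    have "(Dh (g (t *\<^sub>R v)) \<circ> (g' (t *\<^sub>R v) \<circ> (\<lambda>s. s *\<^sub>R v))) = (\<lambda>s. 0)"
    proof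
      fix s :: real
      show "(Dh (g (t *\<^sub>R v)) \<circ> (g' (t *\<^sub>R v) \<circ> (\<lambda>s. s *\<^sub>R v))) s = 0"
        using key[OF q] linear_scale[OF lg'] linear_scale[OF linD[OF pU]] by simp
    qed
    then show ?thesis using c2 has_derivative_at_withinI by (simp add: o_def)
  qed
  have psi0: "h (g (t *\<^sub>R v)) = 0" if "\<bar>t\<bar> < \<rho>" for t
  proof -
    have "h (g (t *\<^sub>R v)) = h (g (0 *\<^sub>R v))"
      by (rule has_derivative_zero_unique[OF convex_ball dpsi]) (use that \<rho> in auto)
    then show ?thesis using g0 hx by simp
  qed
  have inM: "g (t *\<^sub>R v) \<in> M" if "\<bar>t\<bar> < \<rho>" for t
  proof -
    have "g (t *\<^sub>R v) \<in> U" using gV[OF inV[OF that]] U'(2) by blast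
    then show ?thesis using psi0[OF that] MU by blast
  qed
  have Jxv: "J x v = v" unfolding J_def using Pid[OF Av] Av linear_0[OF lAs] unfolding A_def by simp
  have bijx: "bij (J x)" using bijf[of 0] V(2) phix g0 f'a[OF U(2)] by simp
  have g'0: "g' 0 v = v"
  proof -
    have "g' 0 = inv (J x)" using g'eq[of 0] V(2) phix g0 f'a[OF U(2)] by simp
    then show ?thesis using Jxv bij_is_inj[OF bijx] by (metis inv_f_f)
  qed
  have "((g \<circ> (\<lambda>t. t *\<^sub>R v)) has_derivative (g' 0 \<circ> (\<lambda>s. s *\<^sub>R v))) (at 0)"
    using diff_chain_at[OF dsc, of g "g' 0" 0] dg[of 0] V(2) phix by simp
  moreover have "(g' 0 \<circ> (\<lambda>s. s *\<^sub>R v)) = (\<lambda>s. s *\<^sub>R v)"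
    using linear_scale[OF has_derivative_linear[OF dg[of 0]]] V(2) phix g'0 by (auto simp: o_def)
  ultimately have vd: "((\<lambda>t. g (t *\<^sub>R v)) has_vector_derivative v) (at 0)"
    unfolding has_vector_derivative_def by (simp add: o_def)
  have "curve_through M x v (\<lambda>t. g (t *\<^sub>R v))"
    unfolding curve_through_def using g0 \<rho> inM vd by auto
  then show ?thesis unfolding tangent_space_def by blast
qed

lemma tangent_subspace:
  assumes M: "embedded_submanifold M" and xM: "x \<in> M"
  shows "subspace (tangent_space M x)"
proof -
  obtain U and h :: "'a \<Rightarrow> 'a" and k where U: "open U" "x \<in> U" and sm: "smooth_on U h"
    and rk: "\<forall>p\<in>U. dim (range (frechet_derivative h (at p))) = k"
    and MU: "M \<inter> U = {p\<in>U. h p = 0}"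
    using M xM unfolding embedded_submanifold_def by metis
  have C1: "Ck_on (Suc 0) U h" using sm unfolding smooth_on_def by blast
  then have diff: "\<forall>p\<in>U. h differentiable (at p)"
    and cont: "\<forall>v. continuous_on U (\<lambda>p. frechet_derivative h (at p) v)" by simp_all
  have dh: "(h has_derivative frechet_derivative h (at p)) (at p)" if "p \<in> U" for p
    using diff that frechet_derivative_works by blast
  have eq: "tangent_space M x = {v. frechet_derivative h (at x) v = 0}"
  proof
    show "tangent_space M x \<subseteq> {v. frechet_derivative h (at x) v = 0}"
      using tangent_in_ker[OF U MU dh[OF U(2)]] by blast
    show "{v. frechet_derivative h (at x) v = 0} \<subseteq> tangent_space M x"
    proof
      fix v assume "v \<in> {v. frechet_derivative h (at x) v = 0}"
      then have "frechet_derivative h (at x) v = 0" by simp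
      then show "v \<in> tangent_space M x"
        using ker_in_tangent[OF U MU xM, of "\<lambda>p. frechet_derivative h (at p)" k] dh cont rk by blast
    qed
  qed
  have lA: "linear (frechet_derivative h (at x))" using has_derivative_linear[OF dh[OF U(2)]] .
  show ?thesis unfolding eq subspace_def
    using linear_0[OF lA] linear_add[OF lA] linear_scale[OF lA] by simp
qed

lemma riem_grad_eq:
  assumes u: "u \<in> tangent_space M x"
    and d: "\<And>\<gamma> v. curve_through M x v \<gamma> \<Longrightarrow> ((g \<circ> \<gamma>) has_real_derivative (u \<bullet> v)) (at 0)"
  shows "riem_grad M g x = u"
  unfolding riem_grad_def
proof (rule the_equality)
  show "u \<in> tangent_space M x \<and> (\<forall>\<gamma> v. curve_through M x v \<gamma> \<longrightarrow> ((g \<circ> \<gamma>) has_real_derivative u \<bullet> v) (at 0))"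
    using u d by blast
next
  fix u' assume u': "u' \<in> tangent_space M x \<and> (\<forall>\<gamma> v. curve_through M x v \<gamma> \<longrightarrow> ((g \<circ> \<gamma>) has_real_derivative u' \<bullet> v) (at 0))"
  have same: "u \<bullet> v = u' \<bullet> v" if vT: "v \<in> tangent_space M x" for v
  proof -
    obtain \<gamma> where "curve_through M x v \<gamma>" using vT unfolding tangent_space_def by blast
    then show ?thesis using d u' DERIV_unique by metis
  qed
  have "(u' - u) \<bullet> (u' - u) = 0"
    using same[OF u] same[of u'] u' by (simp add: inner_diff_left inner_diff_right inner_commute)
  then show "u' = u" by simp
qed

lemma egrad_eq:
  fixes g :: "'a::euclidean_space \<Rightarrow> real"
  assumes "(g has_derivative (\<lambda>h. u \<bullet> h)) (at y)"
  shows "egrad g y = u"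
  unfolding egrad_def
proof (rule the_equality)
  show "(g has_derivative (\<lambda>h. u \<bullet> h)) (at y)" by fact
next
  fix u' assume "(g has_derivative (\<lambda>h. u' \<bullet> h)) (at y)"
  then have "(\<lambda>h. u' \<bullet> h) = (\<lambda>h. u \<bullet> h)" using assms has_derivative_unique by blast
  then have "u' \<bullet> (u' - u) = u \<bullet> (u' - u)" by metis
  then have "(u' - u) \<bullet> (u' - u) = 0" by (simp add: inner_diff_left)
  then show "u' = u" by simp
qed

lemma tangent_prod_fst:
  fixes M :: "'a::euclidean_space set"
  assumes "\<eta> \<in> tangent_space (M \<times> (UNIV :: 'b::euclidean_space set)) (x, y)"
  shows "fst \<eta> \<in> tangent_space M x"
proof -
  obtain \<gamma> where g: "curve_through (M \<times> (UNIV :: 'b set)) (x, y) \<eta> \<gamma>"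
    using assms unfolding tangent_space_def by blast
  obtain e where e: "\<gamma> 0 = (x, y)" "e > 0" "\<forall>t. \<bar>t\<bar> < e \<longrightarrow> \<gamma> t \<in> M \<times> (UNIV :: 'b set)"
    "(\<gamma> has_vector_derivative \<eta>) (at 0)"
    using g unfolding curve_through_def by blast
  have d: "((\<lambda>t. fst (\<gamma> t)) has_vector_derivative fst \<eta>) (at 0)"
    using has_derivative_fst[OF e(4)[unfolded has_vector_derivative_def]]
    unfolding has_vector_derivative_def by simp
  have "\<forall>t. \<bar>t\<bar> < e \<longrightarrow> fst (\<gamma> t) \<in> M" using e(3) by (simp add: mem_Times_iff)
  then have "curve_through M x (fst \<eta>) (\<lambda>t. fst (\<gamma> t))"
    unfolding curve_through_def using e(1,2) d by auto
  then show ?thesis unfolding tangent_space_def by blast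
qed

lemma tangent_prod_pair:
  fixes M :: "'a::euclidean_space set"
  assumes "a \<in> tangent_space M x"
  shows "(a, b) \<in> tangent_space (M \<times> (UNIV :: 'b::euclidean_space set)) (x, y)"
proof -
  obtain \<gamma> e where g: "\<gamma> 0 = x" "e > 0" "\<And>t. \<bar>t\<bar> < e \<Longrightarrow> \<gamma> t \<in> M"
      "(\<gamma> has_vector_derivative a) (at 0)"
    using assms unfolding tangent_space_def curve_through_def by blast
  have vd: "((\<lambda>t. y + t *\<^sub>R b) has_vector_derivative b) (at 0)"
    by (auto intro!: derivative_eq_intros)
  have "curve_through (M \<times> (UNIV :: 'b set)) (x, y) (a, b) (\<lambda>t. (\<gamma> t, y + t *\<^sub>R b))"
    unfolding curve_through_def using g vd has_vector_derivative_Pair[OF g(4) vd] by auto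
  then show ?thesis unfolding tangent_space_def by blast
qed

lemma descent:
  fixes \<phi> :: "'n::euclidean_space \<Rightarrow> real"
  assumes d: "\<And>y. (\<phi> has_derivative (\<lambda>h. gr y \<bullet> h)) (at y)"
    and L: "\<And>y1 y2. norm (gr y1 - gr y2) \<le> L * norm (y1 - y2)"
  shows "\<phi> (y + \<eta>) \<le> \<phi> y + gr y \<bullet> \<eta> + L / 2 * (norm \<eta>)\<^sup>2"
proof -
  define \<psi> where "\<psi> t = \<phi> (y + t *\<^sub>R \<eta>) - t * (gr y \<bullet> \<eta>) - L / 2 * t\<^sup>2 * (norm \<eta>)\<^sup>2" for t
  have D: "DERIV \<psi> t :> (gr (y + t *\<^sub>R \<eta>) \<bullet> \<eta> - gr y \<bullet> \<eta> - L * t * (norm \<eta>)\<^sup>2)" for t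
  proof -
    have dsc: "((\<lambda>t. y + t *\<^sub>R \<eta>) has_derivative (\<lambda>s. s *\<^sub>R \<eta>)) (at t)"
      by (auto intro!: derivative_eq_intros)
    have c: "((\<lambda>t. \<phi> (y + t *\<^sub>R \<eta>)) has_derivative (\<lambda>s. gr (y + t *\<^sub>R \<eta>) \<bullet> (s *\<^sub>R \<eta>))) (at t)"
      using diff_chain_at[OF dsc d] by (simp add: o_def)
    have c': "((\<lambda>t. \<phi> (y + t *\<^sub>R \<eta>)) has_real_derivative (gr (y + t *\<^sub>R \<eta>) \<bullet> \<eta>)) (at t)"
      unfolding has_field_derivative_def by (rule has_derivative_eq_rhs[OF c]) (simp add: fun_eq_iff)
    show ?thesis unfolding \<psi>_def
      by (rule derivative_eq_intros c' | simp)+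
  qed
  have nonpos: "gr (y + t *\<^sub>R \<eta>) \<bullet> \<eta> - gr y \<bullet> \<eta> - L * t * (norm \<eta>)\<^sup>2 \<le> 0" if "0 \<le> t" for t
  proof -
    have "gr (y + t *\<^sub>R \<eta>) \<bullet> \<eta> - gr y \<bullet> \<eta> = (gr (y + t *\<^sub>R \<eta>) - gr y) \<bullet> \<eta>"
      by (simp add: inner_diff_left)
    also have "\<dots> \<le> norm (gr (y + t *\<^sub>R \<eta>) - gr y) * norm \<eta>" by (rule Cauchy_Schwarz_ineq2[THEN order_trans[OF abs_ge_self]])
    also have "\<dots> \<le> (L * norm (t *\<^sub>R \<eta>)) * norm \<eta>"
      using L[of "y + t *\<^sub>R \<eta>" y] by (simp add: mult_right_mono)
    also have "\<dots> = L * t * (norm \<eta>)\<^sup>2" using that by (simp add: power2_eq_square)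
    finally show ?thesis by simp
  qed
  have "\<psi> 1 \<le> \<psi> 0"
  proof (rule DERIV_nonpos_imp_nonincreasing[of 0 1])
    fix t :: real assume t: "0 \<le> t" "t \<le> 1"
    show "\<exists>y. DERIV \<psi> t :> y \<and> y \<le> 0" using D[of t] nonpos[OF t(1)] by (intro exI conjI)
  qed simp
  then show ?thesis unfolding \<psi>_def by simp
qed

lemma arith_final0:
  fixes A B c Lx Ly m :: real
  assumes "A \<ge> 0" "B \<ge> 0" "c \<ge> 0" "Lx \<le> m" "Ly \<le> m"
  shows "Lx / 2 * A\<^sup>2 + Ly / 2 * B\<^sup>2 + c * A * B \<le> (c + m) / 2 * (A\<^sup>2 + B\<^sup>2)"
proof -
  have 1: "c * (A - B)\<^sup>2 \<ge> 0" using assms by simp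
  have 2: "Lx * A\<^sup>2 \<le> m * A\<^sup>2" using assms by (simp add: mult_right_mono)
  have 3: "Ly * B\<^sup>2 \<le> m * B\<^sup>2" using assms by (simp add: mult_right_mono)
  have 4: "c * (A - B)\<^sup>2 = c * A\<^sup>2 + c * B\<^sup>2 - 2 * (c * A * B)" by (simp add: power2_eq_square algebra_simps)
  have "Lx / 2 * A\<^sup>2 + Ly / 2 * B\<^sup>2 + c * A * B = (Lx * A\<^sup>2 + Ly * B\<^sup>2 + 2 * (c * A * B)) / 2"
    by (simp add: field_simps)
  also have "\<dots> \<le> (m * A\<^sup>2 + m * B\<^sup>2 + (c * A\<^sup>2 + c * B\<^sup>2)) / 2"
  proof (rule divide_right_mono)
    have 5: "2 * (c * A * B) \<le> c * A\<^sup>2 + c * B\<^sup>2" using 1 4 by linarith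
    show "Lx * A\<^sup>2 + Ly * B\<^sup>2 + 2 * (c * A * B) \<le> m * A\<^sup>2 + m * B\<^sup>2 + (c * A\<^sup>2 + c * B\<^sup>2)"
      using add_mono[OF add_mono[OF 2 3] 5] .
  qed simp
  also have "\<dots> = (c + m) / 2 * (A\<^sup>2 + B\<^sup>2)" by (simp add: field_simps)
  finally show ?thesis .
qed

lemma arith_final:
  fixes A B c Lx Ly :: real
  assumes "A \<ge> 0" "B \<ge> 0" "c \<ge> 0"
  shows "Lx / 2 * A\<^sup>2 + Ly / 2 * B\<^sup>2 + c * A * B \<le> (c + max Lx Ly) / 2 * (A\<^sup>2 + B\<^sup>2)"
  by (rule arith_final0[OF assms]) simp_all

lemma local_data:
  fixes f :: "'a::euclidean_space \<Rightarrow> 'b::euclidean_space \<Rightarrow> real"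
  assumes f_diff: "differentiable_on_set (M \<times> UNIV) (\<lambda>z. f (fst z) (snd z))" and xM: "x \<in> M"
  obtains D where "linear D"
    "\<And>\<gamma> \<eta>. curve_through (M \<times> UNIV) (x, y) \<eta> \<gamma> \<Longrightarrow>
        (((\<lambda>z. f (fst z) (snd z)) \<circ> \<gamma>) has_real_derivative D \<eta>) (at 0)"
    "(f x has_derivative (\<lambda>w. D (0, w))) (at y)"
proof -
  let ?F = "\<lambda>z. f (fst z) (snd z)"
  have "(x, y) \<in> M \<times> UNIV" using xM by simp
  then obtain U G where U: "open U" "(x, y) \<in> U" and Gd: "\<forall>q\<in>U. G differentiable (at q)"
    and GF: "\<forall>q\<in>(M \<times> UNIV) \<inter> U. G q = ?F q"
    using f_diff unfolding differentiable_on_set_def by metis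
  define D where "D = frechet_derivative G (at (x, y))"
  have dG: "(G has_derivative D) (at (x, y))" unfolding D_def using Gd U(2) frechet_derivative_works by blast
  have lD: "linear D" using has_derivative_linear[OF dG] .
  have curve: "(((\<lambda>z. f (fst z) (snd z)) \<circ> \<gamma>) has_real_derivative D \<eta>) (at 0)"
    if c: "curve_through (M \<times> UNIV) (x, y) \<eta> \<gamma>" for \<gamma> \<eta>
  proof -
    obtain e where e: "\<gamma> 0 = (x, y)" "e > 0" "\<And>t. \<bar>t\<bar> < e \<Longrightarrow> \<gamma> t \<in> M \<times> UNIV"
      "(\<gamma> has_vector_derivative \<eta>) (at 0)"
      using c unfolding curve_through_def by blast
    obtain d where d: "d > 0" "\<And>t. \<bar>t\<bar> < d \<Longrightarrow> \<gamma> t \<in> U"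
      using curve_eventually_in[OF e(4) U(1)] e(1) U(2) by metis
    have der: "((G \<circ> \<gamma>) has_derivative (D \<circ> (\<lambda>s. s *\<^sub>R \<eta>))) (at 0)"
      using diff_chain_at[OF e(4)[unfolded has_vector_derivative_def], of G D] dG e(1) by simp
    have der2: "((?F \<circ> \<gamma>) has_derivative (D \<circ> (\<lambda>s. s *\<^sub>R \<eta>))) (at 0)"
    proof (rule has_derivative_transform_within_open[OF der, of "ball 0 (min d e)"])
      fix t :: real assume "t \<in> ball 0 (min d e)"
      then have "\<bar>t\<bar> < d" "\<bar>t\<bar> < e" by auto
      then show "(G \<circ> \<gamma>) t = (?F \<circ> \<gamma>) t" using d(2) e(3) GF by auto
    qed (use d e in auto)
    show ?thesis unfolding has_field_derivative_def
      by (rule has_derivative_eq_rhs[OF der2]) (auto simp: fun_eq_iff linear_scale[OF lD])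
  qed
  obtain \<epsilon> where \<epsilon>: "\<epsilon> > 0" "ball (x, y) \<epsilon> \<subseteq> U" using U open_contains_ball by blast
  have dP: "((\<lambda>w. (x, w)) has_derivative (\<lambda>h. (0, h))) (at y)"
    by (auto intro!: derivative_eq_intros)
  have der: "((G \<circ> (\<lambda>w. (x, w))) has_derivative (D \<circ> (\<lambda>h. (0, h)))) (at y)"
    using diff_chain_at[OF dP, of G D] dG by simp
  have "(f x has_derivative (D \<circ> (\<lambda>h. (0, h)))) (at y)"
  proof (rule has_derivative_transform_within_open[OF der, of "ball y \<epsilon>"])
    fix w assume "w \<in> ball y \<epsilon>"
    then have "(x, w) \<in> ball (x, y) \<epsilon>" by (simp add: dist_Pair_Pair dist_commute)
    then have "(x, w) \<in> U" using \<epsilon> by blast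
    then show "(G \<circ> (\<lambda>w. (x, w))) w = f x w" using GF xM by auto
  qed (use \<epsilon> in auto)
  then have "(f x has_derivative (\<lambda>w. D (0, w))) (at y)" by (simp add: o_def)
  then show ?thesis using that lD curve by blast
qed

lemma grads:
  fixes M :: "'a::euclidean_space set" and f :: "'a \<Rightarrow> 'b::euclidean_space \<Rightarrow> real"
  assumes M: "embedded_submanifold M"
    and f_diff: "differentiable_on_set (M \<times> UNIV) (\<lambda>z. f (fst z) (snd z))" and xM: "x \<in> M"
  shows "riem_grad (M \<times> UNIV) (\<lambda>z. f (fst z) (snd z)) (x, y) = (riem_grad M (\<lambda>x. f x y) x, egrad (f x) y)"
    and "(f x has_derivative (\<lambda>h. egrad (f x) y \<bullet> h)) (at y)"
proof -
  let ?F = "\<lambda>z. f (fst z) (snd z)"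
  obtain D where lD: "linear D"
    and curve: "\<And>\<gamma> \<eta>. curve_through (M \<times> UNIV) (x, y) \<eta> \<gamma> \<Longrightarrow> ((?F \<circ> \<gamma>) has_real_derivative D \<eta>) (at 0)"
    and fx: "(f x has_derivative (\<lambda>w. D (0, w))) (at y)"
    by (rule local_data[OF f_diff xM, of y]) (rule that, assumption+)
  define la where "la = (\<lambda>v. D (v, 0::'b))"
  define lb where "lb = (\<lambda>w. D (0::'a, w))"
  have l1: "linear (\<lambda>v. (v, 0::'b))" by (rule linearI) simp_all
  have l2: "linear (\<lambda>w. (0::'a, w))" by (rule linearI) simp_all
  have lla: "linear la" unfolding la_def using linear_compose[OF l1 lD] by (simp add: o_def)
  have llb: "linear lb" unfolding lb_def using linear_compose[OF l2 lD] by (simp add: o_def)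
  define a where "a = adjoint la 1"
  define b where "b = adjoint lb 1"
  have ha: "la v = v \<bullet> a" for v using adjoint_works[OF lla, of v 1] unfolding a_def by simp
  have hb: "lb w = w \<bullet> b" for w using adjoint_works[OF llb, of w 1] unfolding b_def by simp
  have Dsplit: "D \<eta> = fst \<eta> \<bullet> a + snd \<eta> \<bullet> b" for \<eta>
  proof -
    have "\<eta> = (fst \<eta>, 0) + (0, snd \<eta>)" by simp
    then have "D \<eta> = D (fst \<eta>, 0) + D (0, snd \<eta>)" using linear_add[OF lD] by metis
    then show ?thesis using ha hb unfolding la_def lb_def by simp
  qed
  have fxb: "(f x has_derivative (\<lambda>w. b \<bullet> w)) (at y)"
    using fx hb unfolding lb_def by (simp add: inner_commute)
  have eg: "egrad (f x) y = b" using egrad_eq[OF fxb] .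
  show "(f x has_derivative (\<lambda>h. egrad (f x) y \<bullet> h)) (at y)" using fxb eg by simp
  have Tsub: "subspace (tangent_space M x)" using tangent_subspace[OF M xM] .
  obtain uM zz where uM: "uM \<in> span (tangent_space M x)"
    and zz: "\<And>w. w \<in> span (tangent_space M x) \<Longrightarrow> orthogonal zz w" and auz: "a = uM + zz"
    using orthogonal_subspace_decomp_exists[of "tangent_space M x" a] by metis
  have spT: "span (tangent_space M x) = tangent_space M x" using Tsub by (simp add: span_eq_iff)
  have uMT: "uM \<in> tangent_space M x" using uM spT by simp
  have huM: "a \<bullet> v = uM \<bullet> v" if "v \<in> tangent_space M x" for v
    using zz[of v] that spT auz by (simp add: orthogonal_def inner_add_left)
  have rgM: "riem_grad M (\<lambda>x. f x y) x = uM"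
  proof (rule riem_grad_eq[OF uMT])
    fix \<gamma> v assume c: "curve_through M x v \<gamma>"
    then have vT: "v \<in> tangent_space M x" unfolding tangent_space_def by blast
    obtain e where e: "\<gamma> 0 = x" "e > 0" "\<forall>t. \<bar>t\<bar> < e \<longrightarrow> \<gamma> t \<in> M" "(\<gamma> has_vector_derivative v) (at 0)"
      using c unfolding curve_through_def by blast
    have "((\<lambda>t. (\<gamma> t, y)) has_vector_derivative (v, 0)) (at 0)"
      using has_vector_derivative_Pair[OF e(4) has_vector_derivative_const] .
    then have "curve_through (M \<times> UNIV) (x, y) (v, 0) (\<lambda>t. (\<gamma> t, y))"
      unfolding curve_through_def using e by auto
    then have "((?F \<circ> (\<lambda>t. (\<gamma> t, y))) has_real_derivative D (v, 0)) (at 0)" by (rule curve)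
    moreover have "?F \<circ> (\<lambda>t. (\<gamma> t, y)) = (\<lambda>x. f x y) \<circ> \<gamma>" by (simp add: o_def)
    moreover have "D (v, 0) = uM \<bullet> v" using Dsplit[of "(v, 0)"] huM[OF vT] by (simp add: inner_commute)
    ultimately show "(((\<lambda>x. f x y) \<circ> \<gamma>) has_real_derivative uM \<bullet> v) (at 0)" by simp
  qed
  show "riem_grad (M \<times> UNIV) ?F (x, y) = (riem_grad M (\<lambda>x. f x y) x, egrad (f x) y)"
    unfolding rgM eg
  proof (rule riem_grad_eq)
    show "(uM, b) \<in> tangent_space (M \<times> UNIV) (x, y)" using tangent_prod_pair[OF uMT] .
  next
    fix \<gamma> \<eta> assume c: "curve_through (M \<times> UNIV) (x, y) \<eta> \<gamma>"
    then have "\<eta> \<in> tangent_space (M \<times> UNIV) (x, y)" unfolding tangent_space_def by blast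
    then have fT: "fst \<eta> \<in> tangent_space M x" using tangent_prod_fst by blast
    have "D \<eta> = (uM, b) \<bullet> \<eta>"
      using Dsplit[of \<eta>] huM[OF fT] by (cases \<eta>) (simp add: inner_commute)
    then show "((?F \<circ> \<gamma>) has_real_derivative (uM, b) \<bullet> \<eta>) (at 0)" using curve[OF c] by simp
  qed
qed

theorem lemma7:
  fixes M :: "'a::euclidean_space set"
    and f :: "'a \<Rightarrow> real^'n \<Rightarrow> real"
    and R :: "'a \<Rightarrow> 'a \<Rightarrow> 'a"
    and L_y L_x L_xy L_1 :: real
  assumes M: "embedded_submanifold M"
    and f_diff: "differentiable_on_set (M \<times> UNIV) (\<lambda>z. f (fst z) (snd z))"
    and R: "retraction M R"
    and i: "L_y \<ge> 0"
      "\<forall>x\<in>M. \<forall>y1 y2. norm (egrad (f x) y1 - egrad (f x) y2) \<le> L_y * norm (y1 - y2)"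
    and ii: "L_x \<ge> 1" "\<forall>y. grad_lipschitz_retraction M (\<lambda>x. f x y) R L_x"
    and iii: "L_xy \<ge> 0"
      "\<forall>x1\<in>M. \<forall>x2\<in>M. \<forall>y. norm (egrad (f x1) y - egrad (f x2) y) \<le> L_xy * norm (x1 - x2)"
    and iv: "inj_radius M > 0" "L_1 > 0"
      "\<forall>x\<in>M. \<forall>v\<in>tangent_space M x. norm (R x v - x) \<le> L_1 * norm v"
  shows "grad_lipschitz_retraction (M \<times> UNIV) (\<lambda>z. f (fst z) (snd z)) (prod_retr R)
           (L_xy * L_1 + max L_x L_y)"
  unfolding grad_lipschitz_retraction_def
proof (intro ballI)
  let ?F = "\<lambda>z. f (fst z) (snd z)"
  fix z \<eta> :: "'a \<times> (real^'n)" assume z: "z \<in> M \<times> UNIV" and eta: "\<eta> \<in> tangent_space (M \<times> UNIV) z"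
  obtain x y where zz: "z = (x, y)" by (cases z)
  obtain ex ey where ee: "\<eta> = (ex, ey)" by (cases \<eta>)
  have xM: "x \<in> M" using z zz by simp
  have exT: "ex \<in> tangent_space M x" using tangent_prod_fst[of \<eta> M x y] eta zz ee by simp
  define x' where "x' = R x ex"
  have x'M: "x' \<in> M" using R exT xM unfolding retraction_def x'_def by blast
  have rg: "riem_grad (M \<times> UNIV) ?F (x, y) = (riem_grad M (\<lambda>x. f x y) x, egrad (f x) y)"
    using grads(1)[OF M f_diff xM] .
  have s1: "f x' (y + ey) \<le> f x' y + egrad (f x') y \<bullet> ey + L_y / 2 * (norm ey)\<^sup>2"
  proof (rule descent[where gr = "egrad (f x')"])
    show "(f x' has_derivative (\<lambda>h. egrad (f x') y' \<bullet> h)) (at y')" for y'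
      using grads(2)[OF M f_diff x'M] .
    show "norm (egrad (f x') y1 - egrad (f x') y2) \<le> L_y * norm (y1 - y2)" for y1 y2
      using i(2) x'M by blast
  qed
  have s2: "egrad (f x') y \<bullet> ey \<le> egrad (f x) y \<bullet> ey + L_xy * L_1 * norm ex * norm ey"
  proof -
    have "egrad (f x') y \<bullet> ey - egrad (f x) y \<bullet> ey = (egrad (f x') y - egrad (f x) y) \<bullet> ey"
      by (simp add: inner_diff_left)
    also have "\<dots> \<le> norm (egrad (f x') y - egrad (f x) y) * norm ey"
      by (rule order_trans[OF abs_ge_self Cauchy_Schwarz_ineq2])
    also have "\<dots> \<le> (L_xy * norm (x' - x)) * norm ey"
      using iii(2) x'M xM by (simp add: mult_right_mono)
    also have "\<dots> \<le> (L_xy * (L_1 * norm ex)) * norm ey"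
      using iv(3) xM exT iii(1) unfolding x'_def by (simp add: mult_right_mono mult_left_mono)
    finally show ?thesis by (simp add: algebra_simps)
  qed
  have s3: "f x' y \<le> f x y + riem_grad M (\<lambda>x. f x y) x \<bullet> ex + L_x / 2 * (norm ex)\<^sup>2"
    using ii(2) xM exT unfolding grad_lipschitz_retraction_def x'_def by blast
  have nrm: "(norm \<eta>)\<^sup>2 = (norm ex)\<^sup>2 + (norm ey)\<^sup>2" by (simp add: ee norm_Pair)
  have ar: "L_x / 2 * (norm ex)\<^sup>2 + L_y / 2 * (norm ey)\<^sup>2 + (L_xy * L_1) * norm ex * norm ey
      \<le> (L_xy * L_1 + max L_x L_y) / 2 * ((norm ex)\<^sup>2 + (norm ey)\<^sup>2)"
    by (rule arith_final) (use iii(1) iv(2) in simp_all)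
  have lhs: "?F (prod_retr R z \<eta>) = f x' (y + ey)" unfolding zz ee prod_retr_def x'_def by simp
  have rhs: "riem_grad (M \<times> UNIV) ?F z \<bullet> \<eta> = riem_grad M (\<lambda>x. f x y) x \<bullet> ex + egrad (f x) y \<bullet> ey"
    unfolding zz ee rg by simp
  have Fz: "?F z = f x y" unfolding zz by simp
  show "?F (prod_retr R z \<eta>) \<le> ?F z + riem_grad (M \<times> UNIV) ?F z \<bullet> \<eta>
        + (L_xy * L_1 + max L_x L_y) / 2 * (norm \<eta>)\<^sup>2"
    unfolding lhs rhs Fz nrm using s1 s2 s3 ar by linarith
qed

end
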